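(* For any $\delta>0$ there is $L=L(\delta)$ such that $R(g,n)>\big(\tfrac{2}{\sqrt\pi}-\delta\big)\sqrt{gn}$ for all positive integers $g,n$ with $\frac{g}{\log n}>L$ and $\frac ng>L$.
   Context: A set $S$ of integers is a $B^*[g]$ set if for every integer $m$ there are at most $g$ ordered pairs $(s_1,s_2)\in S\times S$ with $s_1+s_2=m$. $R(g,n)$ is the maximum cardinality of a $B^*[g]$ set contained in $\{1,2,\dots,n\}$. *)

theory Defs
  imports Complex_Main
begin

definition rep_count :: "int set \<Rightarrow> int \<Rightarrow> nat" where
  "rep_count S m = card {(s1, s2). s1 \<in> S \<and> s2 \<in> S \<and> s1 + s2 = m}"

definition Bstar :: "nat \<Rightarrow> int set \<Rightarrow> bool" where
  "Bstar g S \<longleftrightarrow> (\<forall>m. rep_count S m \<le> g)"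

definition R :: "nat \<Rightarrow> nat \<Rightarrow> nat" where
  "R g n = Max {card S | S. S \<subseteq> {1..int n} \<and> Bstar g S}"

end

theory Submission
  imports Defs
begin

lemma conv_ineq:
  fixes A B u :: real
  assumes "A > 0" "B > 0" "u > 0" "A + B \<le> 2*u"
  shows "2 / sqrt u \<le> 1/sqrt A + 1/sqrt B"
proof -
  define a where "a = sqrt A"
  define b where "b = sqrt B"
  have a: "a > 0" "a^2 = A" using assms by (auto simp: a_def)
  have b: "b > 0" "b^2 = B" using assms by (auto simp: b_def)
  have s1: "(a+b)^2 = a^2 + b^2 + 2*a*b" by (rule power2_sum)
  have s2: "(a-b)^2 = a^2 + b^2 - 2*a*b" by (rule power2_diff)
  have s3: "0 \<le> (a-b)^2" by (rule zero_le_power2)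
  have su: "(sqrt u)^2 = u" using assms by simp
  have s4: "(2*sqrt u)^2 = 4*u" using su by (simp add: power_mult_distrib)
  have lin: "\<And>x y p q r A B u::real. x = p + q + r \<Longrightarrow> y = p + q - r \<Longrightarrow> 0 \<le> y \<Longrightarrow> p = A \<Longrightarrow> q = B \<Longrightarrow> A + B \<le> 2*u \<Longrightarrow> x \<le> 4*u"
    by linarith
  have "(a+b)^2 \<le> 4*u" by (rule lin[OF s1 s2 s3 a(2) b(2) assms(4)])
  hence "(a+b)^2 \<le> (2*sqrt u)^2" using s4 by simp
  hence ab: "a + b \<le> 2*sqrt u"
    by (rule power2_le_imp_le) (use assms in simp)
  have e4: "(a+b)*(a+b) = 4*(a*b) + (a-b)^2" by (simp add: power2_eq_square algebra_simps)
  have ab4: "4*(a*b) \<le> (a+b)*(a+b)" unfolding e4 using s3 by (rule le_add_same_cancel1[THEN iffD2])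
  have pos: "a*b > 0" "a + b > 0" using a b by auto
  have "1/a + 1/b = (a+b)/(a*b)" using a b by (simp add: field_simps)
  also have "4/(a+b) \<le> (a+b)/(a*b)"
    using ab4 pos by (simp add: divide_le_eq le_divide_eq)
  finally have "4/(a+b) \<le> 1/a+1/b" .
  moreover have "2/sqrt u \<le> 4/(a+b)"
  proof -
    have "2/sqrt u = 4/(2*sqrt u)" by simp
    also have "\<dots> \<le> 4/(a+b)" by (rule divide_left_mono) (use ab pos assms in \<open>auto intro!: mult_pos_pos\<close>)
    finally show ?thesis .
  qed
  ultimately show ?thesis unfolding a_def b_def by linarith
qed

definition ff :: "real \<Rightarrow> real \<Rightarrow> real" where "ff m x = 1 / sqrt (x * (m - x))"
definition FF :: "real \<Rightarrow> real \<Rightarrow> real" where "FF m x = arcsin ((2*x - m)/m)"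

lemma ff_conv:
  assumes "0 < s - h" "s + h < m" "0 \<le> h"
  shows "2 * ff m s \<le> ff m (s+h) + ff m (s-h)"
proof -
  have "2 / sqrt (s*(m-s)) \<le> 1/sqrt ((s+h)*(m-(s+h))) + 1/sqrt ((s-h)*(m-(s-h)))"
  proof (rule conv_ineq)
    show "(s+h)*(m-(s+h)) > 0" by (rule mult_pos_pos) (use assms in auto)
    show "(s-h)*(m-(s-h)) > 0" by (rule mult_pos_pos) (use assms in auto)
    show "s*(m-s) > 0" by (rule mult_pos_pos) (use assms in auto)
  qed (simp add: algebra_simps)
  thus ?thesis by (simp add: ff_def)
qed

lemma FF_deriv:
  assumes "0 < x" "x < m"
  shows "(FF m has_real_derivative ff m x) (at x)"
proof -
  have m: "m > 0" using assms by simp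
  have i: "-1 < (2*x - m)/m" "(2*x - m)/m < 1" using assms m by (auto simp: field_simps)
  have "((\<lambda>x. arcsin ((2*x - m)/m)) has_real_derivative
        inverse (sqrt (1 - ((2*x - m)/m)\<^sup>2)) * (2/m)) (at x)"
    by (rule DERIV_chain2[where f=arcsin and g="\<lambda>x. (2*x-m)/m", OF DERIV_arcsin[OF i]]) (use m in \<open>auto intro!: derivative_eq_intros\<close>)
  moreover have "inverse (sqrt (1 - ((2*x - m)/m)\<^sup>2)) * (2/m) = ff m x"
  proof -
    have e: "1 - ((2*x - m)/m)\<^sup>2 = (2/m)^2 * (x*(m-x))" using m
      by (simp add: field_simps power2_eq_square)
    have "sqrt (1 - ((2*x - m)/m)\<^sup>2) = (2/m) * sqrt (x*(m-x))"
      unfolding e using m by (simp add: real_sqrt_mult)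
    thus ?thesis using m assms by (simp add: ff_def field_simps)
  qed
  ultimately show ?thesis unfolding FF_def by simp
qed

lemma ff_step:
  assumes "1/2 < s" "s + 1/2 < m"
  shows "ff m s \<le> FF m (s + 1/2) - FF m (s - 1/2)"
proof -
  define G where "G h = FF m (s+h) - FF m (s-h) - 2*h*ff m s" for h
  have D: "(G has_real_derivative (ff m (s+h) + ff m (s-h) - 2*ff m s)) (at h)"
    if "0 \<le> h" "h \<le> 1/2" for h
  proof -
    have "((\<lambda>h. FF m (s+h)) has_real_derivative ff m (s+h) * 1) (at h)"
      by (rule DERIV_chain2[where f="FF m" and g="\<lambda>h. s+h", OF FF_deriv]) (use that assms in \<open>auto intro!: derivative_eq_intros\<close>)
    moreover have "((\<lambda>h. FF m (s-h)) has_real_derivative ff m (s-h) * (-1)) (at h)"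
      by (rule DERIV_chain2[OF FF_deriv]) (use that assms in \<open>auto intro!: derivative_eq_intros\<close>)
    ultimately show ?thesis unfolding G_def
      by (auto intro!: derivative_eq_intros)
  qed
  have C: "0 \<le> ff m (s+h) + ff m (s-h) - 2*ff m s" if "0 < h" "h < 1/2" for h
    using ff_conv[of s h m] that assms by linarith
  have "G 0 \<le> G (1/2)"
    apply (rule DERIV_nonneg_imp_increasing_open[of 0 "1/2" G])
    subgoal by simp
    subgoal for h using D[of h] C[of h] by auto
    subgoal
      apply (intro continuous_at_imp_continuous_on ballI)
      subgoal for x by (rule DERIV_isCont[OF D[of x]]) auto
      done
    done
  thus ?thesis by (simp add: G_def)
qed

lemma aux4: "(a::real) \<le> X - Y \<Longrightarrow> S' = S + a \<Longrightarrow> S \<le> Z - W \<Longrightarrow> Y = Z \<Longrightarrow> S' \<le> X - W"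
  by linarith

lemma ff_sum:
  fixes m :: real and j :: nat
  assumes "2 * real j + 1 \<le> m"
  shows "(\<Sum>s=1..j. ff m (real s)) \<le> FF m (real j + 1/2) - FF m (1/2)"
  using assms
proof (induction j)
  case 0 then show ?case by simp
next
  case (Suc j)
  have "ff m (real (Suc j)) \<le> FF m (real (Suc j) + 1/2) - FF m (real (Suc j) - 1/2)"
    by (rule ff_step) (use Suc.prems in auto)
  moreover have "(\<Sum>s=1..Suc j. ff m (real s)) = (\<Sum>s=1..j. ff m (real s)) + ff m (real (Suc j))"
    by (simp add: sum.cl_ivl_Suc del: of_nat_Suc)
  moreover have "(\<Sum>s=1..j. ff m (real s)) \<le> FF m (real j + 1/2) - FF m (1/2)"
    by (rule Suc.IH) (use Suc.prems in simp)
  moreover have "FF m (real (Suc j) - 1/2) = FF m (real j + 1/2)"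
    by (rule arg_cong[where f="FF m"]) simp
  ultimately show ?case by (rule aux4)
qed

lemma aux5: "(A::real) \<le> B \<Longrightarrow> B = 0 \<Longrightarrow> C \<le> D \<Longrightarrow> C = - pi/2 \<Longrightarrow> S \<le> A - D \<Longrightarrow> S \<le> pi/2"
  by linarith

lemma ff_sum_pi:
  fixes m :: real and j :: nat
  assumes "2 * real j + 1 \<le> m"
  shows "(\<Sum>s=1..j. ff m (real s)) \<le> pi/2"
proof -
  have m: "m > 0" using assms by (smt (verit) of_nat_0_le_iff)
  have a1: "-1 \<le> (2*(real j + 1/2) - m)/m" using m assms by (simp add: pos_le_divide_eq)
  have a2: "(2*(real j + 1/2) - m)/m \<le> (2*(m/2) - m)/m"
    by (rule divide_right_mono) (use m assms in auto)
  have a3: "(2*(m/2) - m)/m = 0" by simp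
  have c1: "FF m (real j + 1/2) \<le> FF m (m/2)" unfolding FF_def
    by (rule arcsin_le_arcsin) (use a1 a2 a3 in auto)
  have c2: "FF m (m/2) = 0" unfolding FF_def a3 by simp
  have b0: "(2*0 - m)/m = -1" using m by simp
  have b1: "(2*0 - m)/m \<le> (2*(1/2) - m)/m"
    by (rule divide_right_mono) (use m in auto)
  have b2: "(2*(1/2) - m)/m \<le> 1" using m assms by (simp add: pos_divide_le_eq)
  have c3: "FF m 0 \<le> FF m (1/2)" unfolding FF_def
    by (rule arcsin_le_arcsin) (use b0 b1 b2 in auto)
  have c4: "FF m 0 = - pi/2" unfolding FF_def b0 by simp
  show ?thesis by (rule aux5[OF c1 c2 c3 c4 ff_sum[OF assms]])
qed

definition W :: "int set \<Rightarrow> (int \<Rightarrow> real) \<Rightarrow> int set \<Rightarrow> real" where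
  "W V p S = (\<Prod>x\<in>S. p x) * (\<Prod>x\<in>V - S. 1 - p x)"

lemma W_sub:
  assumes "finite V" "U \<subseteq> V"
  shows "(\<Sum>S\<in>Pow V. if U \<subseteq> S then W V p S else 0) = (\<Prod>x\<in>U. p x)"
proof -
  define q where "q x = (if x \<in> U then 0 else 1 - p x)" for x
  have e1: "(\<Prod>x\<in>V. p x + q x) = (\<Sum>X\<in>Pow V. (\<Prod>x\<in>X. p x) * (\<Prod>x\<in>V-X. q x))"
    by (rule prod_add[OF assms(1)])
  have e2: "(\<Sum>X\<in>Pow V. (\<Prod>x\<in>X. p x) * (\<Prod>x\<in>V-X. q x)) = (\<Sum>S\<in>Pow V. if U \<subseteq> S then W V p S else 0)"
  proof (rule sum.cong[OF refl])
    fix X assume X: "X \<in> Pow V"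
    show "(\<Prod>x\<in>X. p x) * (\<Prod>x\<in>V-X. q x) = (if U \<subseteq> X then W V p X else 0)"
    proof (cases "U \<subseteq> X")
      case True
      have "(\<Prod>x\<in>V-X. q x) = (\<Prod>x\<in>V-X. 1 - p x)"
        by (rule prod.cong) (use True in \<open>auto simp: q_def\<close>)
      then show ?thesis using True by (simp add: W_def)
    next
      case False
      then obtain y where y: "y \<in> U" "y \<notin> X" by blast
      have "(\<Prod>x\<in>V-X. q x) = 0"
      proof (rule prod_zero)
        show "finite (V - X)" using assms by simp
        show "\<exists>x\<in>V - X. q x = 0" using y assms by (intro bexI[of _ y]) (auto simp: q_def)
      qed
      then show ?thesis using False by simp
    qed
  qed
  have e3: "(\<Prod>x\<in>V. p x + q x) = (\<Prod>x\<in>V. if x \<in> U then p x else 1)"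
    by (rule prod.cong) (auto simp: q_def)
  have e4: "(\<Prod>x\<in>V. if x \<in> U then p x else 1) = (\<Prod>x\<in>V \<inter> U. p x)"
    by (rule prod.inter_restrict[symmetric, OF assms(1)])
  have e5: "V \<inter> U = U" using assms by blast
  show ?thesis using e1 e2 e3 e4 e5 by simp
qed

lemma W_total:
  assumes "finite V"
  shows "(\<Sum>S\<in>Pow V. W V p S) = 1"
  using W_sub[OF assms, of "{}" p] by simp

lemma W_nonneg:
  assumes "\<forall>x\<in>V. 0 \<le> p x \<and> p x \<le> 1" "S \<subseteq> V"
  shows "0 \<le> W V p S"
  unfolding W_def using assms by (intro mult_nonneg_nonneg prod_nonneg) auto

lemma W_card:
  assumes "finite V"
  shows "(\<Sum>S\<in>Pow V. W V p S * real (card S)) = (\<Sum>x\<in>V. p x)"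
proof -
  have "(\<Sum>S\<in>Pow V. W V p S * real (card S)) = (\<Sum>S\<in>Pow V. \<Sum>x\<in>V. if {x} \<subseteq> S then W V p S else 0)"
  proof (rule sum.cong[OF refl])
    fix S assume S: "S \<in> Pow V"
    have "real (card S) = (\<Sum>x\<in>V \<inter> S. 1)" using S by (simp add: Int_absorb1)
    also have "\<dots> = (\<Sum>x\<in>V. if x \<in> S then 1 else 0)" by (rule sum.inter_restrict[OF assms])
    finally have "W V p S * real (card S) = (\<Sum>x\<in>V. W V p S * (if x \<in> S then 1 else 0))"
      by (simp add: sum_distrib_left)
    also have "\<dots> = (\<Sum>x\<in>V. if {x} \<subseteq> S then W V p S else 0)" by (rule sum.cong) auto
    finally show "W V p S * real (card S) = (\<Sum>x\<in>V. if {x} \<subseteq> S then W V p S else 0)" .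
  qed
  also have "\<dots> = (\<Sum>x\<in>V. \<Sum>S\<in>Pow V. if {x} \<subseteq> S then W V p S else 0)" by (rule sum.swap)
  also have "\<dots> = (\<Sum>x\<in>V. p x)"
    by (rule sum.cong[OF refl]) (subst W_sub[OF assms], auto)
  finally show ?thesis .
qed

lemma pow_ge:
  fixes x y :: real
  assumes "0 \<le> x" "0 \<le> y"
  shows "x^(Suc j) + real (Suc j) * y * x^j \<le> (y + x)^(Suc j)"
proof (induction j)
  case 0 then show ?case by simp
next
  case (Suc j)
  have "x^(Suc (Suc j)) + real (Suc (Suc j)) * y * x^(Suc j)
      \<le> (x^(Suc j) + real (Suc j) * y * x^j) * (y + x)"
  proof -
    have "(x^(Suc j) + real (Suc j) * y * x^j) * (y + x)
        = x^(Suc (Suc j)) + real (Suc (Suc j)) * y * x^(Suc j) + real (Suc j) * y * y * x^j"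
      by (simp add: algebra_simps)
    moreover have "0 \<le> real (Suc j) * y * y * x^j" using assms by simp
    ultimately show ?thesis by linarith
  qed
  also have "\<dots> \<le> (y + x)^(Suc j) * (y + x)"
    by (rule mult_right_mono[OF Suc]) (use assms in simp)
  finally show ?case by (simp add: mult.commute)
qed


lemma ksets_insert:
  assumes "finite P" "a \<notin> P"
  shows "{T. T \<subseteq> insert a P \<and> card T = Suc j}
       = {T. T \<subseteq> P \<and> card T = Suc j} \<union> insert a ` {T. T \<subseteq> P \<and> card T = j}"
proof (intro equalityI subsetI)
  fix T assume T: "T \<in> {T. T \<subseteq> insert a P \<and> card T = Suc j}"
  have fT: "finite T" using T assms finite_subset by auto
  show "T \<in> {T. T \<subseteq> P \<and> card T = Suc j} \<union> insert a ` {T. T \<subseteq> P \<and> card T = j}"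
  proof (cases "a \<in> T")
    case True
    have "T = insert a (T - {a})" using True by blast
    moreover have "T - {a} \<subseteq> P" "card (T - {a}) = j" using T True fT by auto
    ultimately show ?thesis by blast
  next
    case False then show ?thesis using T by auto
  qed
next
  fix T assume T: "T \<in> {T. T \<subseteq> P \<and> card T = Suc j} \<union> insert a ` {T. T \<subseteq> P \<and> card T = j}"
  then show "T \<in> {T. T \<subseteq> insert a P \<and> card T = Suc j}"
  proof
    assume "T \<in> {T. T \<subseteq> P \<and> card T = Suc j}" then show ?thesis by auto
  next
    assume "T \<in> insert a ` {T. T \<subseteq> P \<and> card T = j}"
    then obtain T' where T': "T = insert a T'" "T' \<subseteq> P" "card T' = j" by auto
    have "finite T'" using T' assms finite_subset by auto
    moreover have "a \<notin> T'" using T' assms by auto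
    ultimately show ?thesis using T' by auto
  qed
qed

lemma esym_bound:
  fixes q :: "'a \<Rightarrow> real"
  assumes "finite P" "\<forall>x\<in>P. 0 \<le> q x"
  shows "fact k * (\<Sum>T\<in>{T. T \<subseteq> P \<and> card T = k}. \<Prod>x\<in>T. q x) \<le> (\<Sum>x\<in>P. q x)^k"
  using assms
proof (induction P arbitrary: k rule: finite_induct)
  case empty
  show ?case
  proof (cases k)
    case 0
    have e: "{T. T \<subseteq> {} \<and> card T = k} = {{}}" using 0 by auto
    show ?thesis unfolding e using 0 by simp
  next
    case (Suc j)
    have e: "{T. T \<subseteq> {} \<and> card T = k} = {}" using Suc by auto
    show ?thesis unfolding e using Suc by simp
  qed
next
  case (insert a P)
  have qa: "0 \<le> q a" using insert.prems by simp
  have qP: "\<forall>x\<in>P. 0 \<le> q x" using insert.prems by simp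
  have sP: "0 \<le> (\<Sum>x\<in>P. q x)" using qP by (simp add: sum_nonneg)
  show ?case
  proof (cases k)
    case 0
    have "{T. T \<subseteq> insert a P \<and> card T = 0} = {{}}"
      using insert.hyps by (auto dest: finite_subset)
    then show ?thesis using 0 by simp
  next
    case (Suc j)
    define K1 where "K1 = {T. T \<subseteq> P \<and> card T = Suc j}"
    define K0 where "K0 = {T. T \<subseteq> P \<and> card T = j}"
    have fin: "finite K1" "finite K0" unfolding K1_def K0_def using insert.hyps by auto
    have disj: "K1 \<inter> insert a ` K0 = {}" unfolding K1_def K0_def using insert.hyps by auto
    have inj: "inj_on (insert a) K0"
    proof (rule inj_onI)
      fix x y assume xy: "x \<in> K0" "y \<in> K0" "insert a x = insert a y"
      have "a \<notin> x" "a \<notin> y" using xy(1,2) insert.hyps unfolding K0_def by auto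
      then show "x = y" using xy(3) insert_ident by metis
    qed
    have "(\<Sum>T\<in>{T. T \<subseteq> insert a P \<and> card T = Suc j}. \<Prod>x\<in>T. q x)
        = (\<Sum>T\<in>K1 \<union> insert a ` K0. \<Prod>x\<in>T. q x)"
      unfolding K1_def K0_def by (rule arg_cong[OF ksets_insert[OF insert.hyps]])
    also have "\<dots> = (\<Sum>T\<in>K1. \<Prod>x\<in>T. q x) + (\<Sum>T\<in>insert a ` K0. \<Prod>x\<in>T. q x)"
      by (rule sum.union_disjoint) (use fin disj in auto)
    also have "(\<Sum>T\<in>insert a ` K0. \<Prod>x\<in>T. q x) = (\<Sum>T\<in>K0. \<Prod>x\<in>insert a T. q x)"
      by (rule sum.reindex[OF inj, unfolded comp_def])
    also have "\<dots> = (\<Sum>T\<in>K0. q a * (\<Prod>x\<in>T. q x))"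
    proof (rule sum.cong[OF refl])
      fix T assume "T \<in> K0"
      hence "finite T" "a \<notin> T" unfolding K0_def using insert.hyps finite_subset by auto
      then show "(\<Prod>x\<in>insert a T. q x) = q a * (\<Prod>x\<in>T. q x)" by simp
    qed
    also have "\<dots> = q a * (\<Sum>T\<in>K0. \<Prod>x\<in>T. q x)" by (simp add: sum_distrib_left)
    finally have eq: "(\<Sum>T\<in>{T. T \<subseteq> insert a P \<and> card T = Suc j}. \<Prod>x\<in>T. q x)
        = (\<Sum>T\<in>K1. \<Prod>x\<in>T. q x) + q a * (\<Sum>T\<in>K0. \<Prod>x\<in>T. q x)" .
    have IH1: "fact (Suc j) * (\<Sum>T\<in>K1. \<Prod>x\<in>T. q x) \<le> (\<Sum>x\<in>P. q x)^(Suc j)"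
      unfolding K1_def by (rule insert.IH[OF qP])
    have IH0: "fact j * (\<Sum>T\<in>K0. \<Prod>x\<in>T. q x) \<le> (\<Sum>x\<in>P. q x)^j"
      unfolding K0_def by (rule insert.IH[OF qP])
    have "fact k * (\<Sum>T\<in>{T. T \<subseteq> insert a P \<and> card T = k}. \<Prod>x\<in>T. q x)
        = fact (Suc j) * (\<Sum>T\<in>K1. \<Prod>x\<in>T. q x) + real (Suc j) * q a * (fact j * (\<Sum>T\<in>K0. \<Prod>x\<in>T. q x))"
      unfolding Suc eq by (simp add: algebra_simps)
    also have "\<dots> \<le> (\<Sum>x\<in>P. q x)^(Suc j) + real (Suc j) * q a * (\<Sum>x\<in>P. q x)^j"
      by (rule add_mono[OF IH1 mult_left_mono[OF IH0]]) (use qa in simp)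
    also have "\<dots> \<le> (q a + (\<Sum>x\<in>P. q x))^(Suc j)" by (rule pow_ge[OF sP qa])
    also have "\<dots> = (\<Sum>x\<in>insert a P. q x)^k" using insert.hyps Suc by simp
    finally show ?thesis .
  qed
qed

lemma ffact_ge:
  assumes "k \<le> N"
  shows "(N - k + 1)^k \<le> fact k * (N choose k)"
proof -
  have "fact N = fact k * (N choose k) * fact (N - k)"
    using binomial_fact_lemma[OF assms] by (simp add: algebra_simps)
  hence "fact k * (N choose k) = fact N div fact (N - k)" by simp
  also have "\<dots> = \<Prod>{N - k + 1..N}" by (rule fact_div_fact) simp
  also have "\<dots> \<ge> (\<Prod>i\<in>{N - k + 1..N}. N - k + 1)"
    by (rule prod_mono) auto
  also have "(\<Prod>i\<in>{N - k + 1..N}. N - k + 1) = (N - k + 1)^k"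
    using assms by simp
  finally show ?thesis .
qed

definition Aset :: "int set \<Rightarrow> int \<Rightarrow> int set" where
  "Aset S m = {s \<in> S. 2*s < m \<and> m - s \<in> S}"

lemma card_pairs_le:
  assumes "finite S"
  shows "card {(s1, s2). s1 \<in> S \<and> s2 \<in> S \<and> s1 + s2 = m} \<le> 2 * card (Aset S m) + 1"
proof -
  define A where "A = Aset S m"
  have fA: "finite A" unfolding A_def Aset_def using assms by simp
  have sub: "{(s1, s2). s1 \<in> S \<and> s2 \<in> S \<and> s1 + s2 = m}
      \<subseteq> (\<lambda>s. (s, m - s)) ` A \<union> (\<lambda>s. (m - s, s)) ` A \<union> {(m div 2, m div 2)}"
  proof
    fix z assume "z \<in> {(s1, s2). s1 \<in> S \<and> s2 \<in> S \<and> s1 + s2 = m}"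
    then obtain s1 s2 where z: "z = (s1, s2)" "s1 \<in> S" "s2 \<in> S" "s1 + s2 = m" by auto
    consider "2*s1 < m" | "2*s2 < m" | "2*s1 = m" using z by linarith
    then show "z \<in> (\<lambda>s. (s, m - s)) ` A \<union> (\<lambda>s. (m - s, s)) ` A \<union> {(m div 2, m div 2)}"
    proof cases
      case 1
      have "s1 \<in> A" using 1 z unfolding A_def Aset_def by auto
      moreover have "z = (s1, m - s1)" using z by auto
      ultimately show ?thesis by blast
    next
      case 2
      have "s2 \<in> A" using 2 z unfolding A_def Aset_def by auto
      moreover have "z = (m - s2, s2)" using z by auto
      ultimately show ?thesis by blast
    next
      case 3
      then have "s1 = m div 2" "s2 = m div 2" using z by auto
      then show ?thesis using z by auto
    qed
  qed
  have "card {(s1, s2). s1 \<in> S \<and> s2 \<in> S \<and> s1 + s2 = m}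
      \<le> card ((\<lambda>s. (s, m - s)) ` A \<union> (\<lambda>s. (m - s, s)) ` A \<union> {(m div 2, m div 2)})"
    by (rule card_mono[OF _ sub]) (use fA in auto)
  also have "\<dots> \<le> card ((\<lambda>s. (s, m - s)) ` A \<union> (\<lambda>s. (m - s, s)) ` A) + card {(m div 2, m div 2)}"
    by (rule card_Un_le)
  also have "\<dots> \<le> card ((\<lambda>s. (s, m - s)) ` A) + card ((\<lambda>s. (m - s, s)) ` A) + 1"
    using card_Un_le by simp
  also have "\<dots> \<le> card A + card A + 1"
    by (intro add_mono card_image_le[OF fA] order_refl)
  finally show ?thesis unfolding A_def by simp
qed

definition Pm :: "int set \<Rightarrow> int \<Rightarrow> int set" where
  "Pm V m = {s \<in> V. 2*s < m \<and> m - s \<in> V}"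

lemma Aset_sub: "S \<subseteq> V \<Longrightarrow> Aset S m \<subseteq> Pm V m"
  unfolding Aset_def Pm_def by auto

lemma T_sub_iff:
  assumes "T \<subseteq> Pm V m"
  shows "T \<subseteq> Aset S m \<longleftrightarrow> T \<union> (\<lambda>s. m - s) ` T \<subseteq> S"
  using assms unfolding Aset_def Pm_def by auto

lemma prod_pairs:
  assumes "T \<subseteq> Pm V m" "finite T"
  shows "(\<Prod>x\<in>T \<union> (\<lambda>s. m - s) ` T. p x) = (\<Prod>s\<in>T. p s * p (m - s))"
proof -
  have disj: "T \<inter> (\<lambda>s. m - s) ` T = {}"
  proof (rule ccontr)
    assume "T \<inter> (\<lambda>s. m - s) ` T \<noteq> {}"
    then obtain s t where st: "s \<in> T" "t \<in> T" "s = m - t" by auto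
    have "2*s < m" "2*t < m" using st assms unfolding Pm_def by auto
    then show False using st by linarith
  qed
  have inj: "inj_on (\<lambda>s. m - s) T" by (rule inj_onI) simp
  have "(\<Prod>x\<in>T \<union> (\<lambda>s. m - s) ` T. p x) = (\<Prod>x\<in>T. p x) * (\<Prod>x\<in>(\<lambda>s. m - s) ` T. p x)"
    by (rule prod.union_disjoint) (use assms disj in auto)
  also have "(\<Prod>x\<in>(\<lambda>s. m - s) ` T. p x) = (\<Prod>s\<in>T. p (m - s))"
    by (subst prod.reindex[OF inj]) (simp add: comp_def)
  finally show ?thesis by (simp add: prod.distrib)
qed

lemma card_filter_sum:
  assumes "finite K"
  shows "real (card {T \<in> K. Q T}) = (\<Sum>T\<in>K. if Q T then 1 else 0)"
proof -
  have "real (card {T \<in> K. Q T}) = (\<Sum>T\<in>{T \<in> K. Q T}. 1)" by simp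
  also have "\<dots> = (\<Sum>T\<in>K. if Q T then 1 else 0)" by (rule sum.inter_filter[OF assms])
  finally show ?thesis .
qed

lemma bad_m:
  fixes V :: "int set" and p :: "int \<Rightarrow> real" and m :: int and a k :: nat
  assumes V: "finite V" and p: "\<forall>x\<in>V. 0 \<le> p x \<and> p x \<le> 1" and ka: "k \<le> a"
  shows "real ((a - k + 1)^k) * (\<Sum>S\<in>Pow V. if a \<le> card (Aset S m) then W V p S else 0)
          \<le> (\<Sum>s\<in>Pm V m. p s * p (m - s))^k"
proof -
  define K where "K = {T. T \<subseteq> Pm V m \<and> card T = k}"
  define h where "h = (\<lambda>s::int. m - s)"
  have fP: "finite (Pm V m)" using V unfolding Pm_def by simp
  have fK: "finite K" unfolding K_def using fP by simp
  have step1: "real ((a - k + 1)^k) * (if a \<le> card (Aset S m) then W V p S else 0)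
      \<le> fact k * (\<Sum>T\<in>K. if T \<union> h ` T \<subseteq> S then W V p S else 0)" if S: "S \<in> Pow V" for S
  proof (cases "a \<le> card (Aset S m)")
    case True
    define A where "A = Aset S m"
    have SV: "S \<subseteq> V" using S by simp
    have fS: "finite S" by (rule finite_subset[OF SV V])
    have fA: "finite A" unfolding A_def Aset_def using fS by simp
    have AP: "A \<subseteq> Pm V m" unfolding A_def by (rule Aset_sub[OF SV])
    have kA: "k \<le> card A" using True ka unfolding A_def by simp
    have "(a - k + 1)^k \<le> (card A - k + 1)^k"
      by (rule power_mono) (use True A_def in auto)
    also have "\<dots> \<le> fact k * (card A choose k)" by (rule ffact_ge[OF kA])
    also have "card A choose k = card {T. T \<subseteq> A \<and> card T = k}" by (rule n_subsets[OF fA, symmetric])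
    also have "{T. T \<subseteq> A \<and> card T = k} = {T \<in> K. T \<union> h ` T \<subseteq> S}"
    proof (intro equalityI subsetI)
      fix T assume "T \<in> {T. T \<subseteq> A \<and> card T = k}"
      then show "T \<in> {T \<in> K. T \<union> h ` T \<subseteq> S}"
        using AP T_sub_iff[of T V m S] unfolding K_def h_def A_def by auto
    next
      fix T assume "T \<in> {T \<in> K. T \<union> h ` T \<subseteq> S}"
      then show "T \<in> {T. T \<subseteq> A \<and> card T = k}"
        using T_sub_iff[of T V m S] unfolding K_def h_def A_def by auto
    qed
    finally have c: "real ((a - k + 1)^k) \<le> fact k * real (card {T \<in> K. T \<union> h ` T \<subseteq> S})"
      by (metis of_nat_fact of_nat_le_iff of_nat_mult)
    have w: "0 \<le> W V p S" by (rule W_nonneg[OF p]) (use S in simp)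
    have "real ((a - k + 1)^k) * W V p S \<le> fact k * real (card {T \<in> K. T \<union> h ` T \<subseteq> S}) * W V p S"
      by (rule mult_right_mono[OF c w])
    also have "\<dots> = fact k * (\<Sum>T\<in>K. if T \<union> h ` T \<subseteq> S then W V p S else 0)"
      unfolding card_filter_sum[OF fK] mult.assoc sum_distrib_right
      by (intro arg_cong[where f="\<lambda>x. fact k * x"] sum.cong) auto
    finally show ?thesis using True by simp
  next
    case False
    have "0 \<le> (\<Sum>T\<in>K. if T \<union> h ` T \<subseteq> S then W V p S else 0)"
      using W_nonneg[OF p] S by (intro sum_nonneg) auto
    then show ?thesis using False by simp
  qed
  have "real ((a - k + 1)^k) * (\<Sum>S\<in>Pow V. if a \<le> card (Aset S m) then W V p S else 0)
      = (\<Sum>S\<in>Pow V. real ((a - k + 1)^k) * (if a \<le> card (Aset S m) then W V p S else 0))"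
    by (simp add: sum_distrib_left)
  also have "\<dots> \<le> (\<Sum>S\<in>Pow V. fact k * (\<Sum>T\<in>K. if T \<union> h ` T \<subseteq> S then W V p S else 0))"
    by (rule sum_mono) (rule step1)
  also have "\<dots> = fact k * (\<Sum>T\<in>K. \<Sum>S\<in>Pow V. if T \<union> h ` T \<subseteq> S then W V p S else 0)"
    by (simp add: sum_distrib_left[symmetric] sum.swap[of _ K])
  also have "(\<Sum>T\<in>K. \<Sum>S\<in>Pow V. if T \<union> h ` T \<subseteq> S then W V p S else 0) = (\<Sum>T\<in>K. \<Prod>s\<in>T. p s * p (m - s))"
  proof (rule sum.cong[OF refl])
    fix T assume T: "T \<in> K"
    have TP: "T \<subseteq> Pm V m" using T unfolding K_def by simp
    have fT: "finite T" using TP fP finite_subset by auto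
    have sub: "T \<union> h ` T \<subseteq> V" using TP unfolding Pm_def h_def by auto
    show "(\<Sum>S\<in>Pow V. if T \<union> h ` T \<subseteq> S then W V p S else 0) = (\<Prod>s\<in>T. p s * p (m - s))"
      unfolding W_sub[OF V sub] unfolding h_def by (rule prod_pairs[OF TP fT])
  qed
  also have "fact k * (\<Sum>T\<in>K. \<Prod>s\<in>T. p s * p (m - s)) \<le> (\<Sum>s\<in>Pm V m. p s * p (m - s))^k"
    unfolding K_def by (rule esym_bound[OF fP]) (use p in \<open>auto simp: Pm_def\<close>)
  finally show ?thesis .
qed

lemma sqrt_step:
  fixes y :: real
  assumes "y > 0"
  shows "2 * (sqrt (y + 1) - sqrt y) \<le> 1 / sqrt y"
proof -
  define a where "a = sqrt (y + 1)"
  define b where "b = sqrt y"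
  have b: "b > 0" using assms by (simp add: b_def)
  have ab: "b \<le> a" unfolding a_def b_def by simp
  have "(a - b) * (a + b) = a^2 - b^2" by (simp add: power2_eq_square algebra_simps)
  also have "\<dots> = 1" unfolding a_def b_def using assms by simp
  finally have e: "(a - b) * (a + b) = 1" .
  have "a - b = 1 / (a + b)" using e b ab by (simp add: field_simps)
  also have "\<dots> \<le> 1 / (2 * b)" by (rule divide_left_mono) (use b ab in auto)
  finally have "a - b \<le> 1 / (2*b)" .
  then show ?thesis unfolding a_def b_def using b b_def by (simp add: field_simps)
qed

lemma sum_inv_sqrt:
  fixes c :: real
  assumes "c \<ge> 0"
  shows "2 * (sqrt (real n + c + 1) - sqrt (c + 1)) \<le> (\<Sum>x\<in>{1..int n}. 1 / sqrt (real_of_int x + c))"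
proof (induction n)
  case 0 then show ?case by simp
next
  case (Suc n)
  have e: "{1..int (Suc n)} = insert (int n + 1) {1..int n}" by auto
  have "(\<Sum>x\<in>{1..int (Suc n)}. 1 / sqrt (real_of_int x + c))
      = 1 / sqrt (real n + 1 + c) + (\<Sum>x\<in>{1..int n}. 1 / sqrt (real_of_int x + c))"
    unfolding e by (subst sum.insert) auto
  moreover have "2 * (sqrt (real n + 1 + c + 1) - sqrt (real n + 1 + c)) \<le> 1 / sqrt (real n + 1 + c)"
    by (rule sqrt_step) (use assms in simp)
  ultimately show ?case using Suc.IH by (simp add: algebra_simps)
qed

lemma mu_bound:
  fixes \<beta> g :: real and m :: int and n :: nat
  assumes "g \<ge> 0" "\<beta> \<ge> 0"
  shows "(\<Sum>s\<in>Pm {1..int n} m. (\<beta> / sqrt (real_of_int s + g)) * (\<beta> / sqrt (real_of_int (m - s) + g)))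
         \<le> \<beta>^2 * (pi / 2)"
proof (cases "Pm {1..int n} m = {}")
  case True then show ?thesis by simp
next
  case False
  then obtain s0 where s0: "s0 \<in> Pm {1..int n} m" by blast
  have m3: "m \<ge> 3" using s0 unfolding Pm_def by auto
  define j where "j = nat ((m - 1) div 2)"
  have j: "2 * real j + 1 \<le> real_of_int m"
  proof -
    have "2 * int j + 1 \<le> m" unfolding j_def using m3 by simp
    then have "real_of_int (2 * int j + 1) \<le> real_of_int m" by (simp only: of_int_le_iff)
    then show ?thesis by simp
  qed
  have tm: "(\<beta> / sqrt (real_of_int s + g)) * (\<beta> / sqrt (real_of_int (m - s) + g))
      \<le> \<beta>^2 * ff (real_of_int m) (real_of_int s)" if s: "s \<in> Pm {1..int n} m" for s
  proof -
    have s1: "real_of_int s \<ge> 1" "real_of_int (m - s) \<ge> 1" using s unfolding Pm_def by auto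
    have pos: "0 < real_of_int s * (real_of_int m - real_of_int s)" using s1 by simp
    have le: "real_of_int s * (real_of_int m - real_of_int s) \<le> (real_of_int s + g) * (real_of_int (m - s) + g)"
      using s1 assms by (intro mult_mono) auto
    have "(\<beta> / sqrt (real_of_int s + g)) * (\<beta> / sqrt (real_of_int (m - s) + g))
        = \<beta>^2 / sqrt ((real_of_int s + g) * (real_of_int (m - s) + g))"
      by (simp add: power2_eq_square real_sqrt_mult)
    also have "\<dots> \<le> \<beta>^2 / sqrt (real_of_int s * (real_of_int m - real_of_int s))"
      by (rule divide_left_mono) (use pos le in auto)
    also have "\<dots> = \<beta>^2 * ff (real_of_int m) (real_of_int s)" by (simp add: ff_def)
    finally show ?thesis .
  qed
  have sub: "Pm {1..int n} m \<subseteq> int ` {1..j}"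
  proof
    fix s assume s: "s \<in> Pm {1..int n} m"
    have "1 \<le> s" "2 * s < m" using s unfolding Pm_def by auto
    hence "s = int (nat s)" "nat s \<in> {1..j}" unfolding j_def by auto
    then show "s \<in> int ` {1..j}" by blast
  qed
  have nonneg: "0 \<le> ff (real_of_int m) (real_of_int s)" if "s \<in> int ` {1..j}" for s
  proof -
    have "1 \<le> s" "s \<le> int j" using that by auto
    moreover have "int j < m" using j by linarith
    ultimately have "0 < real_of_int s * (real_of_int m - real_of_int s)" by simp
    then show ?thesis by (simp add: ff_def)
  qed
  have "(\<Sum>s\<in>Pm {1..int n} m. (\<beta> / sqrt (real_of_int s + g)) * (\<beta> / sqrt (real_of_int (m - s) + g)))
      \<le> (\<Sum>s\<in>Pm {1..int n} m. \<beta>^2 * ff (real_of_int m) (real_of_int s))"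
    by (rule sum_mono) (rule tm)
  also have "\<dots> = \<beta>^2 * (\<Sum>s\<in>Pm {1..int n} m. ff (real_of_int m) (real_of_int s))"
    by (simp add: sum_distrib_left)
  also have "(\<Sum>s\<in>Pm {1..int n} m. ff (real_of_int m) (real_of_int s)) \<le> (\<Sum>s\<in>int ` {1..j}. ff (real_of_int m) (real_of_int s))"
    by (rule sum_mono2) (use sub nonneg in auto)
  also have "\<dots> = (\<Sum>s=1..j. ff (real_of_int m) (real s))"
    by (subst sum.reindex) (auto simp: inj_on_def)
  also have "\<dots> \<le> pi / 2" by (rule ff_sum_pi[OF j])
  finally show ?thesis using assms by (simp add: mult_left_mono)
qed


lemma auxq: "2 * ((B::real) - C) \<le> S \<Longrightarrow> A \<le> B \<Longrightarrow> 2 * (A - C) \<le> S"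
  by (smt (verit))

lemma t3test:
  fixes \<beta> \<delta> L G :: real and g n :: nat
  assumes g0: "g > 0" and \<beta>0: "0 \<le> \<beta>" and \<beta>g: "\<beta> \<le> sqrt (real g)" and assms: "\<delta> > 0"
    and L1: "144/\<delta>^2 \<le> L" and nL: "L * real g < real n" and G: "G = sqrt (real g) * sqrt (real n)"
  shows "2 * \<beta> * sqrt (real g + 1) \<le> (\<delta>/4) * G"
proof -
  have gpos: "real g > 0" using g0 by simp
  have "sqrt (real g + 1) \<le> sqrt (2 * real g)" using g0 by simp
  also have "\<dots> = sqrt 2 * sqrt (real g)" by (rule real_sqrt_mult)
  finally have s0: "sqrt (real g + 1) \<le> sqrt 2 * sqrt (real g)" .
  have s2: "sqrt 2 \<le> (3/2::real)"
  proof -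
    have "sqrt 2 \<le> sqrt (9/4::real)" by simp
    moreover have "sqrt (9/4::real) = 3/2" by (rule real_sqrt_unique) (simp_all add: power2_eq_square)
    ultimately show ?thesis by simp
  qed
  have "sqrt 2 * sqrt (real g) \<le> 3/2 * sqrt (real g)" by (rule mult_right_mono[OF s2]) simp
  with s0 have s1: "sqrt (real g + 1) \<le> 3/2 * sqrt (real g)" by (rule order_trans)
  have "2 * \<beta> * sqrt (real g + 1) \<le> 2 * sqrt (real g) * (3/2 * sqrt (real g))"
    using \<beta>0 \<beta>g s1 by (intro mult_mono) auto
  also have "\<dots> = 3 * (sqrt (real g) * sqrt (real g))" by simp
  also have "\<dots> = 3 * real g" by simp
  also have "3 * real g \<le> (\<delta>/4) * G"
  proof -
    have "144/\<delta>^2 * real g \<le> L * real g" using L1 gpos by (intro mult_right_mono) auto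
    hence "144/\<delta>^2 * real g < real n" using nL by (rule le_less_trans)
    hence "144 * real g < \<delta>^2 * real n" using assms by (simp add: field_simps)
    hence "(12 * sqrt (real g))^2 \<le> (\<delta> * sqrt (real n))^2" by (simp add: power_mult_distrib)
    hence "12 * sqrt (real g) \<le> \<delta> * sqrt (real n)"
      by (rule power2_le_imp_le) (use assms in simp)
    hence "12 * sqrt (real g) * sqrt (real g) \<le> \<delta> * sqrt (real n) * sqrt (real g)"
      by (intro mult_right_mono) auto
    moreover have "12 * sqrt (real g) * sqrt (real g) = 12 * real g" by (simp add: mult.assoc)
    moreover have "(\<delta>/4) * G = (\<delta> * sqrt (real n) * sqrt (real g)) / 4" unfolding G by (simp add: algebra_simps)
    ultimately show ?thesis by linarith
  qed
  finally show ?thesis .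
qed

lemma t4test:
  fixes \<delta> L G :: real and g n :: nat
  assumes g0: "g > 0" and n0: "n > 0" and assms: "\<delta> > 0" and Lpos: "L > 0"
    and L1: "24/\<delta> + 1 \<le> L" and nL: "L * real g < real n" and G1: "1 \<le> G"
  shows "4 / real n < (\<delta>/4) * G"
proof -
  have "L \<le> L * real g" using Lpos g0 by simp
  hence "24/\<delta> + 1 < real n" using nL L1 by linarith
  hence "16/\<delta> < real n" using assms by (smt (verit) divide_right_mono)
  hence "16 < \<delta> * real n" using assms by (simp add: field_simps)
  hence "4 / real n < \<delta>/4" using n0 by (simp add: field_simps)
  also have "\<dots> \<le> (\<delta>/4) * G" using G1 assms by simp
  finally show ?thesis .
qed

lemma fin_aux:
  fixes E Rr NB Q X1 X2 c e G d :: real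
  assumes "E \<le> Rr + NB" "NB \<le> Q" "X1 - X2 \<le> E" "X1 = c*G - c*e*G" "c*e*G \<le> (d/2)*G"
    "X2 \<le> (d/4)*G" "Q < (d/4)*G"
  shows "(c - d) * G < Rr"
proof -
  have e1: "(c - d) * G = c*G - d*G" by (simp add: left_diff_distrib)
  have e2: "d*G = (d/2)*G + (d/4)*G + (d/4)*G" by (simp add: field_simps)
  show ?thesis using assms e1 e2 by linarith
qed


theorem theorem3p9:
  fixes \<delta> :: real
  assumes "\<delta> > 0"
  shows "\<exists>L::real. \<forall>g n::nat. g > 0 \<and> n > 0 \<and> real g / ln (real n) > L \<and> real n / real g > L
           \<longrightarrow> real (R g n) > (2 / sqrt pi - \<delta>) * sqrt (real g * real n)"
proof -
  define \<epsilon> where "\<epsilon> = min (1/2) (\<delta>/4)"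
  have \<epsilon>0: "0 < \<epsilon>" and \<epsilon>1: "\<epsilon> \<le> 1/2" and \<epsilon>2: "\<epsilon> \<le> \<delta>/4" using assms by (auto simp: \<epsilon>_def)
  define L where "L = max (max (144/\<delta>^2) (6/\<epsilon>^2)) (24/\<delta> + 1)"
  have L1: "144/\<delta>^2 \<le> L" "6/\<epsilon>^2 \<le> L" "24/\<delta> + 1 \<le> L" by (auto simp: L_def)
  have d24: "0 < 24/\<delta>" using assms by simp
  have Lpos: "L > 0" using L1(3) d24 by linarith
  show ?thesis
  proof (intro exI[of _ L] allI impI)
    fix g n :: nat
    assume H: "g > 0 \<and> n > 0 \<and> real g / ln (real n) > L \<and> real n / real g > L"
    then have g0: "g > 0" and n0: "n > 0" and HL1: "real g / ln (real n) > L"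
      and HL2: "real n / real g > L" by auto
    have lnpos: "ln (real n) > 0"
    proof (rule ccontr)
      assume "\<not> ln (real n) > 0"
      hence "real g / ln (real n) \<le> 0" by (simp add: divide_nonneg_nonpos)
      with HL1 Lpos show False by linarith
    qed
    have gL: "L * ln (real n) < real g" using HL1 lnpos by (simp add: pos_less_divide_eq)
    have gpos: "real g > 0" using g0 by simp
    have nL: "L * real g < real n" using HL2 gpos by (simp add: pos_less_divide_eq)
    define V where "V = {1..int n}"
    have fV: "finite V" by (simp add: V_def)
    define \<beta> where "\<beta> = (1 - \<epsilon>) * sqrt (real g / pi)"
    define p where "p x = \<beta> / sqrt (real_of_int x + real g)" for x :: int
    have \<beta>0: "0 \<le> \<beta>" using \<epsilon>1 by (simp add: \<beta>_def)
    have \<beta>g: "\<beta> \<le> sqrt (real g)"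
    proof -
      have "real g / pi \<le> real g" using gpos pi_ge_two by (simp add: divide_le_eq)
      hence "sqrt (real g / pi) \<le> sqrt (real g)" by simp
      moreover have "(1 - \<epsilon>) * sqrt (real g / pi) \<le> sqrt (real g / pi)"
      proof -
        have "0 \<le> \<epsilon> * sqrt (real g / pi)" using \<epsilon>0 by simp
        then show ?thesis by (simp add: algebra_simps)
      qed
      ultimately show ?thesis unfolding \<beta>_def by linarith
    qed
    have p01: "\<forall>x\<in>V. 0 \<le> p x \<and> p x \<le> 1"
    proof
      fix x assume x: "x \<in> V"
      have x1: "real_of_int x \<ge> 1" using x by (simp add: V_def)
      have sx: "sqrt (real g) \<le> sqrt (real_of_int x + real g)" using x1 by simp
      have b: "\<beta> \<le> sqrt (real_of_int x + real g)" using sx \<beta>g by linarith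
      have pos: "0 < sqrt (real_of_int x + real g)" using x1 gpos by simp
      have "p x \<le> 1" unfolding p_def using b pos by (simp add: pos_divide_le_eq)
      moreover have "0 \<le> p x" unfolding p_def using \<beta>0 pos by simp
      ultimately show "0 \<le> p x \<and> p x \<le> 1" by simp
    qed
    define a where "a = (g + 1) div 2"
    define k where "k = nat (floor (\<epsilon> * real a))"
    have a2n: "g \<le> 2 * a" unfolding a_def by presburger
    have a2: "real g \<le> 2 * real a" using a2n by linarith
    have ea0: "0 \<le> \<epsilon> * real a" using \<epsilon>0 by simp
    have k_eq: "real k = of_int (floor (\<epsilon> * real a))" unfolding k_def using ea0 by simp
    have k_hi: "real k \<le> \<epsilon> * real a" using k_eq of_int_floor_le[of "\<epsilon> * real a"] by linarith
    have k_lo: "\<epsilon> * real a - 1 \<le> real k" using k_eq real_of_int_floor_add_one_gt[of "\<epsilon> * real a"] by linarith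
    have ka: "k \<le> a"
    proof -
      have "\<epsilon> * real a \<le> real a" using \<epsilon>1 \<epsilon>0 by (intro mult_left_le_one_le) auto
      then show ?thesis using k_hi by linarith
    qed
    have \<beta>sq: "\<beta>^2 * (pi/2) = (1 - \<epsilon>)^2 * real g / 2"
      unfolding \<beta>_def using gpos by (simp add: power_mult_distrib)
    have mu: "(\<Sum>s\<in>Pm V m. p s * p (m - s)) \<le> (1 - \<epsilon>)^2 * real g / 2" for m
      using mu_bound[of "real g" \<beta> m n] gpos \<beta>0 \<beta>sq unfolding V_def p_def by simp
    define X where "X = exp (- (\<epsilon>^2 * real g / 2))"
    have Pbad: "(\<Sum>S\<in>Pow V. if a \<le> card (Aset S m) then W V p S else 0) \<le> 2 * X" for m
    proof -
      define P where "P = (\<Sum>S\<in>Pow V. if a \<le> card (Aset S m) then W V p S else 0)"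
      define \<mu> where "\<mu> = (\<Sum>s\<in>Pm V m. p s * p (m - s))"
      have bm: "real ((a - k + 1)^k) * P \<le> \<mu>^k" unfolding P_def \<mu>_def by (rule bad_m[OF fV p01 ka])
      have \<mu>0: "0 \<le> \<mu>" unfolding \<mu>_def using p01 by (intro sum_nonneg mult_nonneg_nonneg) (auto simp: Pm_def)
      have d: "real (a - k + 1) = real a - real k + 1" using ka by (simp add: of_nat_diff)
      have \<mu>le: "\<mu> \<le> (1 - \<epsilon>) * real (a - k + 1)"
      proof -
        have "\<mu> \<le> (1 - \<epsilon>)^2 * real g / 2" unfolding \<mu>_def by (rule mu)
        also have "\<dots> \<le> (1 - \<epsilon>)^2 * real a"
        proof -
          have "(1 - \<epsilon>)^2 * real g \<le> (1 - \<epsilon>)^2 * (2 * real a)" by (rule mult_left_mono[OF a2]) simp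
          then show ?thesis by simp
        qed
        also have "\<dots> = (1 - \<epsilon>) * ((1 - \<epsilon>) * real a)" by (simp add: power2_eq_square)
        also have "(1 - \<epsilon>) * real a \<le> real (a - k + 1)" unfolding d using k_hi by (simp add: algebra_simps)
        hence "(1 - \<epsilon>) * ((1 - \<epsilon>) * real a) \<le> (1 - \<epsilon>) * real (a - k + 1)"
          using \<epsilon>1 by (intro mult_left_mono) auto
        finally show ?thesis by simp
      qed
      have "\<mu>^k \<le> ((1 - \<epsilon>) * real (a - k + 1))^k" by (rule power_mono[OF \<mu>le \<mu>0])
      also have "\<dots> = real ((a - k + 1)^k) * (1 - \<epsilon>)^k" by (simp add: power_mult_distrib)
      finally have "real ((a - k + 1)^k) * P \<le> real ((a - k + 1)^k) * (1 - \<epsilon>)^k" using bm by linarith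
      moreover have "0 < real ((a - k + 1)^k)" by simp
      ultimately have P1: "P \<le> (1 - \<epsilon>)^k" by (simp add: mult_le_cancel_left_pos)
      have "(1 - \<epsilon>)^k \<le> exp (- \<epsilon>)^k"
        using exp_ge_add_one_self[of "- \<epsilon>"] \<epsilon>1 by (intro power_mono) auto
      also have "\<dots> = exp (real k * (- \<epsilon>))" by (rule exp_of_nat_mult[symmetric])
      also have "\<dots> \<le> exp (1/2 + (- (\<epsilon>^2 * real g / 2)))"
      proof -
        have "\<epsilon> * (\<epsilon> * real a - 1) \<le> \<epsilon> * real k" using k_lo \<epsilon>0 by (intro mult_left_mono) auto
        moreover have "\<epsilon> * (\<epsilon> * real a - 1) = \<epsilon>^2 * real a - \<epsilon>" by (simp add: power2_eq_square algebra_simps)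
        moreover have "\<epsilon>^2 * real g \<le> \<epsilon>^2 * (2 * real a)" using a2 by (intro mult_left_mono) auto
        ultimately have f1: "\<epsilon>^2 * real a - \<epsilon> \<le> \<epsilon> * real k" and f2: "\<epsilon>^2 * real g \<le> 2 * (\<epsilon>^2 * real a)"
          by (linarith, simp)
        have f3: "real k * (- \<epsilon>) = - (\<epsilon> * real k)" by simp
        have "real k * (- \<epsilon>) \<le> 1/2 + (- (\<epsilon>^2 * real g / 2))" unfolding f3 using f1 f2 \<epsilon>1 by linarith
        then show ?thesis by simp
      qed
      also have "\<dots> = exp (1/2) * X" unfolding X_def by (rule exp_add)
      also have "\<dots> \<le> 2 * X" using exp_half_le2 by (intro mult_right_mono) (auto simp: X_def)
      finally show ?thesis using P1 unfolding P_def by linarith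
    qed
    define M where "M = {2..2 * int n}"
    have fM: "finite M" by (simp add: M_def)
    have cardM: "real (card M) \<le> 2 * real n" by (simp add: M_def)
    have W0: "0 \<le> W V p S" if "S \<in> Pow V" for S using W_nonneg[OF p01] that by simp
    have bad_cover: "(if \<not> Bstar g S then W V p S else 0) \<le> (\<Sum>m\<in>M. if a \<le> card (Aset S m) then W V p S else 0)"
      if S: "S \<in> Pow V" for S
    proof (cases "Bstar g S")
      case True
      then show ?thesis using W0[OF S] by (simp add: sum_nonneg)
    next
      case False
      then obtain m where m: "rep_count S m > g" unfolding Bstar_def by (auto simp: not_le)
      have SV: "S \<subseteq> V" using S by simp
      have fS: "finite S" using SV fV finite_subset by auto
      have "card {(s1, s2). s1 \<in> S \<and> s2 \<in> S \<and> s1 + s2 = m} > 0" using m unfolding rep_count_def by simp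
      then have "{(s1, s2). s1 \<in> S \<and> s2 \<in> S \<and> s1 + s2 = m} \<noteq> {}" by (metis card.empty less_irrefl)
      then obtain s1 s2 where s12: "s1 \<in> S" "s2 \<in> S" "s1 + s2 = m" by auto
      have "s1 \<in> {1..int n}" "s2 \<in> {1..int n}" using s12 SV unfolding V_def by auto
      then have mM: "m \<in> M" using s12 unfolding M_def by auto
      have "rep_count S m \<le> 2 * card (Aset S m) + 1" unfolding rep_count_def by (rule card_pairs_le[OF fS])
      then have "g \<le> 2 * card (Aset S m)" using m by linarith
      then have aA: "a \<le> card (Aset S m)" unfolding a_def by presburger
      have "W V p S \<le> (\<Sum>m\<in>M. if a \<le> card (Aset S m) then W V p S else 0)"
        using member_le_sum[OF mM, of "\<lambda>m. if a \<le> card (Aset S m) then W V p S else 0"] W0[OF S] fM aA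
        by auto
      then show ?thesis using False by simp
    qed
    have Rge: "card S \<le> R g n" if "S \<in> Pow V" "Bstar g S" for S
    proof -
      have fin: "finite {card S |S. S \<subseteq> {1..int n} \<and> Bstar g S}"
        by (rule finite_subset[of _ "card ` Pow {1..int n}"]) auto
      show ?thesis unfolding R_def by (rule Max_ge[OF fin]) (use that V_def in auto)
    qed
    have cardn: "card S \<le> n" if "S \<in> Pow V" for S
    proof -
      have "card S \<le> card V" using that fV by (simp add: card_mono)
      then show ?thesis by (simp add: V_def)
    qed
    define B where "B = (\<Sum>S\<in>Pow V. if \<not> Bstar g S then W V p S else 0)"
    have h1: "(\<Sum>x\<in>V. p x) \<le> real (R g n) + real n * B"
    proof -
      have "(\<Sum>x\<in>V. p x) = (\<Sum>S\<in>Pow V. W V p S * real (card S))" by (rule W_card[OF fV, symmetric])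
      also have "\<dots> \<le> (\<Sum>S\<in>Pow V. W V p S * real (R g n) + real n * (if \<not> Bstar g S then W V p S else 0))"
      proof (rule sum_mono)
        fix S assume S: "S \<in> Pow V"
        show "W V p S * real (card S) \<le> W V p S * real (R g n) + real n * (if \<not> Bstar g S then W V p S else 0)"
        proof (cases "Bstar g S")
          case True
          then show ?thesis using Rge[OF S True] W0[OF S] by (simp add: mult_left_mono)
        next
          case False
          have "W V p S * real (card S) \<le> W V p S * real n" using cardn[OF S] W0[OF S] by (simp add: mult_left_mono)
          moreover have "0 \<le> W V p S * real (R g n)" using W0[OF S] by simp
          ultimately show ?thesis using False by (simp add: mult.commute)
        qed
      qed
      also have "\<dots> = real (R g n) * (\<Sum>S\<in>Pow V. W V p S) + real n * B"
        unfolding B_def by (simp add: sum.distrib sum_distrib_left sum_distrib_right mult.commute)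
      also have "\<dots> = real (R g n) + real n * B" using W_total[OF fV] by simp
      finally show ?thesis .
    qed
    have h2: "B \<le> real (card M) * (2 * X)"
    proof -
      have "B \<le> (\<Sum>S\<in>Pow V. \<Sum>m\<in>M. if a \<le> card (Aset S m) then W V p S else 0)"
        unfolding B_def by (rule sum_mono) (rule bad_cover)
      also have "\<dots> = (\<Sum>m\<in>M. \<Sum>S\<in>Pow V. if a \<le> card (Aset S m) then W V p S else 0)" by (rule sum.swap)
      also have "\<dots> \<le> (\<Sum>m\<in>M. 2 * X)" by (rule sum_mono) (rule Pbad)
      also have "\<dots> = real (card M) * (2 * X)" by simp
      finally show ?thesis .
    qed
    have X0: "0 \<le> X" by (simp add: X_def)
    have h4: "X \<le> 1 / (real n)^3"
    proof -
      have "6 / \<epsilon>^2 * ln (real n) \<le> L * ln (real n)" using L1(2) lnpos by (intro mult_right_mono) auto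
      hence "6 / \<epsilon>^2 * ln (real n) < real g" using gL by linarith
      hence "6 * ln (real n) < \<epsilon>^2 * real g" using \<epsilon>0 by (simp add: field_simps)
      hence "- (\<epsilon>^2 * real g / 2) \<le> real 3 * (- ln (real n))" by simp
      hence "X \<le> exp (real 3 * (- ln (real n)))" unfolding X_def by simp
      also have "\<dots> = exp (- ln (real n))^3" by (rule exp_of_nat_mult)
      also have "exp (- ln (real n)) = 1 / real n" using n0 by (simp add: exp_minus exp_ln divide_inverse)
      finally show ?thesis by (simp add: power_one_over)
    qed
    have h5: "real n * B \<le> 4 / real n"
    proof -
      have "real n * B \<le> real n * (real (card M) * (2 * X))" using h2 by (intro mult_left_mono) auto
      also have "\<dots> \<le> real n * ((2 * real n) * (2 * (1 / (real n)^3)))"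
        using cardM h4 X0 by (intro mult_left_mono mult_mono) auto
      also have "\<dots> = 4 / real n" using n0 by (simp add: power3_eq_cube field_simps)
      finally show ?thesis .
    qed
    have h6: "2 * \<beta> * (sqrt (real n) - sqrt (real g + 1)) \<le> (\<Sum>x\<in>V. p x)"
    proof -
      have e: "(\<Sum>x\<in>V. p x) = \<beta> * (\<Sum>x\<in>V. 1 / sqrt (real_of_int x + real g))"
        unfolding p_def by (simp add: sum_distrib_left)
      have q1: "2 * (sqrt (real n + real g + 1) - sqrt (real g + 1)) \<le> (\<Sum>x\<in>V. 1 / sqrt (real_of_int x + real g))"
        unfolding V_def by (rule sum_inv_sqrt) simp
      have q2: "sqrt (real n) \<le> sqrt (real n + real g + 1)" by simp
      have q: "2 * (sqrt (real n) - sqrt (real g + 1)) \<le> (\<Sum>x\<in>V. 1 / sqrt (real_of_int x + real g))"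
        by (rule auxq[OF q1 q2])
      have "\<beta> * (2 * (sqrt (real n) - sqrt (real g + 1))) \<le> \<beta> * (\<Sum>x\<in>V. 1 / sqrt (real_of_int x + real g))"
        by (rule mult_left_mono[OF q \<beta>0])
      then show ?thesis unfolding e by (simp add: ac_simps)
    qed
    define G where "G = sqrt (real g * real n)"
    have G: "G = sqrt (real g) * sqrt (real n)" unfolding G_def by (simp add: real_sqrt_mult)
    have gn1: "1 \<le> real g * real n"
      using mult_mono[of 1 "real g" 1 "real n"] g0 n0 by simp
    have G1: "1 \<le> G" unfolding G_def using gn1 by simp
    have sp: "1 \<le> sqrt pi" using pi_ge_two by simp
    have t1: "2 * \<beta> * sqrt (real n) = (2 / sqrt pi) * G - (2 / sqrt pi) * \<epsilon> * G"
      unfolding \<beta>_def G using gpos sp by (simp add: real_sqrt_divide field_simps)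
    have t2: "(2 / sqrt pi) * \<epsilon> * G \<le> (\<delta>/2) * G"
    proof -
      have "2 / sqrt pi \<le> 2" using sp by (simp add: divide_le_eq)
      hence "(2 / sqrt pi) * \<epsilon> \<le> 2 * \<epsilon>" using \<epsilon>0 by (intro mult_right_mono) auto
      also have "\<dots> \<le> \<delta>/2" using \<epsilon>2 by simp
      finally show ?thesis using G1 by (intro mult_right_mono) auto
    qed
    have t3: "2 * \<beta> * sqrt (real g + 1) \<le> (\<delta>/4) * G"
      by (rule t3test[OF g0 \<beta>0 \<beta>g assms L1(1) nL G])
    have t4: "4 / real n < (\<delta>/4) * G"
      by (rule t4test[OF g0 n0 assms Lpos L1(3) nL G1])
    have "2 * \<beta> * (sqrt (real n) - sqrt (real g + 1)) = 2 * \<beta> * sqrt (real n) - 2 * \<beta> * sqrt (real g + 1)"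
      by (simp add: algebra_simps)
    with h6 have h6': "2 * \<beta> * sqrt (real n) - 2 * \<beta> * sqrt (real g + 1) \<le> (\<Sum>x\<in>V. p x)" by simp
    have "(2 / sqrt pi - \<delta>) * G < real (R g n)"
      by (rule fin_aux[OF h1 h5 h6' t1 t2 t3 t4])
    then show "real (R g n) > (2 / sqrt pi - \<delta>) * sqrt (real g * real n)"
      unfolding G_def by simp
  qed
qed

end
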